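(* For the interval algorithm $\phi_{\mathrm{int}}$ generating $Y^n$ from the coin process $\mathbf X$, with stopping time $T$, for every integer $m\ge0$ and all real numbers $\lambda,\tau\ge0$, \[ \Pr(T>m)\ \le\ P_{X^m}(\mathcal S_m^c(\lambda)) + P_{Y^n}(\mathcal T_n^c(\tau)) + 2^{-\lambda+\tau+1}, \] where $\mathcal S_m(\lambda)=\{x^m\in\mathcal X^m:\log\frac{1}{P_{X^m}(x^m)}\ge\lambda\}$ and $\mathcal T_n(\tau)=\{y^n\in\mathcal Y^n:\log\frac{1}{P_{Y^n}(y^n)}\le\tau\}$, and complements are in $\mathcal X^m$, $\mathcal Y^n$.
   Context: Logarithms are base 2. $\mathcal X=\{1,\dots,M\}$, $\mathcal Y=\{1,\dots,N\}$ are finite sets; the coin process $\mathbf X=\{X^m\}_{m\ge1}$ on $\mathcal X$ and target process $\mathbf Y=\{Y^n\}_{n\ge1}$ on $\mathcal Y$ are arbitrary processes given by consistent families of distributions $P_{X^m}$, $P_{Y^n}$. Interval algorithm: for a finite sequence $s\in\mathcal X^i$ define an interval $\mathcal I_s=[\underline\alpha_s,\overline\alpha_s)\subseteq[0,1)$ recursively by $\mathcal I_{\bot}=[0,1)$ for the empty sequence and, for $x\in\mathcal X$, $\underline\alpha_{sx}=\underline\alpha_s+(\overline\alpha_s-\underline\alpha_s)\sum_{k=1}^{x-1}P_{X_{i+1}|X^i}(k|s)$, $\overline\alpha_{sx}=\underline\alpha_s+(\overline\alpha_s-\underline\alpha_s)\sum_{k=1}^{x}P_{X_{i+1}|X^i}(k|s)$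 (conditional probabilities given a probability-zero prefix may be chosen arbitrarily); thus $|\mathcal I_s|=P_{X^i}(s)$. Define $\mathcal J_t=[\underline\beta_t,\overline\beta_t)$ for $t\in\mathcal Y^j$ in the same way from the conditional distributions $P_{Y_{j+1}|Y^j}$, so $|\mathcal J_t|=P_{Y^j}(t)$ and $\{\mathcal J_{y^n}\}_{y^n\in\mathcal Y^n}$ partitions $[0,1)$. The interval algorithm observes $X_1,X_2,\dots$ and stops at the first time $m$ such that $\mathcal I_{X^m}\subseteq\mathcal J_{y^n}$ for some $y^n\in\mathcal Y^n$, outputting that $y^n$ (for $P_{X^m}(X^m)>0$ this $y^n$ is unique; it may be run sequentially, outputting $y_j$ as soon as $\mathcal I_{X^i}\subseteq\mathcal J_{y^j}$, with the same stopping time and output). Its stopping time $T$ is this first time ($T=\infty$ if it never happens); $\phi_{\mathrm{int}}(x^m)$ denotes the output if the algorithm has stopped after reading $x^m$, and $\bot$ otherwise. *)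

theory Defs
  imports Complex_Main
begin

(* A process on the alphabet {1..K} is given by a consistent family of
   finite-dimensional distributions, encoded as a function P on finite
   sequences: P s = P_{X^{length s}}(s). *)
definition is_process :: "nat \<Rightarrow> (nat list \<Rightarrow> real) \<Rightarrow> bool" where
  "is_process K P \<longleftrightarrow>
     P [] = 1 \<and>
     (\<forall>s. P s \<ge> 0) \<and>
     (\<forall>s. \<not> set s \<subseteq> {1..K} \<longrightarrow> P s = 0) \<and>
     (\<forall>s. P s = (\<Sum>k\<in>{1..K}. P (s @ [k])))"

definition seqs :: "nat \<Rightarrow> nat \<Rightarrow> nat list set" where
  "seqs K n = {s. length s = n \<and> set s \<subseteq> {1..K}}"

(* conditional probability P_{X_{i+1}|X^i}(k|s); for P s = 0 it is 0 (arbitrary choice) *)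
definition cond :: "(nat list \<Rightarrow> real) \<Rightarrow> nat list \<Rightarrow> nat \<Rightarrow> real" where
  "cond P s k = P (s @ [k]) / P s"

fun ivl_rev :: "(nat list \<Rightarrow> real) \<Rightarrow> nat list \<Rightarrow> real \<times> real" where
  "ivl_rev P [] = (0, 1)"
| "ivl_rev P (x # rs) =
     (let (a, b) = ivl_rev P rs; s = rev rs in
       (a + (b - a) * (\<Sum>k\<in>{1..<x}. cond P s k),
        a + (b - a) * (\<Sum>k\<in>{1..x}. cond P s k)))"

definition ivl :: "(nat list \<Rightarrow> real) \<Rightarrow> nat list \<Rightarrow> real set" where
  "ivl P s = {fst (ivl_rev P (rev s)) ..< snd (ivl_rev P (rev s))}"

definition int_stopped ::
  "(nat list \<Rightarrow> real) \<Rightarrow> nat \<Rightarrow> (nat list \<Rightarrow> real) \<Rightarrow> nat \<Rightarrow> nat list \<Rightarrow> bool" where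
  "int_stopped PX N PY n xs \<longleftrightarrow> (\<exists>ys\<in>seqs N n. ivl PX xs \<subseteq> ivl PY ys)"

definition prob_T_gt ::
  "nat \<Rightarrow> (nat list \<Rightarrow> real) \<Rightarrow> nat \<Rightarrow> (nat list \<Rightarrow> real) \<Rightarrow> nat \<Rightarrow> nat \<Rightarrow> real" where
  "prob_T_gt M PX N PY n m =
     (\<Sum>xs\<in>seqs M m. if (\<forall>i\<le>m. \<not> int_stopped PX N PY n (take i xs)) then PX xs else 0)"

definition S_set :: "nat \<Rightarrow> (nat list \<Rightarrow> real) \<Rightarrow> nat \<Rightarrow> real \<Rightarrow> nat list set" where
  "S_set M PX m lam = {xs\<in>seqs M m. log 2 (1 / PX xs) \<ge> lam}"

definition T_set :: "nat \<Rightarrow> (nat list \<Rightarrow> real) \<Rightarrow> nat \<Rightarrow> real \<Rightarrow> nat list set" where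
  "T_set N PY n tau = {ys\<in>seqs N n. log 2 (1 / PY ys) \<le> tau}"

end

theory Submission
  imports Defs "HOL-Analysis.Analysis"
begin

lemma proc_nonneg: "is_process K P \<Longrightarrow> 0 \<le> P s"
  unfolding is_process_def by blast

lemma proc_sum: "is_process K P \<Longrightarrow> P s = (\<Sum>k\<in>{1..K}. P (s @ [k]))"
  unfolding is_process_def by blast

lemma proc_empty: "is_process K P \<Longrightarrow> P [] = 1"
  unfolding is_process_def by blast

lemma proc_child_le:
  assumes "is_process K P" shows "P (s @ [k]) \<le> P s"
proof (cases "k \<in> {1..K}")
  case True
  have "P (s@[k]) \<le> (\<Sum>j\<in>{1..K}. P (s@[j]))"
    by (rule member_le_sum) (use assms True proc_nonneg in auto)
  then show ?thesis using proc_sum[OF assms, of s] by simp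
next
  case False
  then have "\<not> set (s@[k]) \<subseteq> {1..K}" by auto
  then have "P (s@[k]) = 0" using assms unfolding is_process_def by blast
  then show ?thesis using proc_nonneg[OF assms] by simp
qed

lemma cond_nonneg: "is_process K P \<Longrightarrow> 0 \<le> cond P s k"
  unfolding cond_def by (simp add: proc_nonneg)

lemma cond_sum_le:
  assumes "is_process K P" shows "(\<Sum>k\<in>{1..K}. cond P s k) \<le> 1"
proof -
  have "(\<Sum>k\<in>{1..K}. cond P s k) = (\<Sum>k\<in>{1..K}. P (s@[k])) / P s"
    unfolding cond_def by (simp add: sum_divide_distrib)
  also have "\<dots> = P s / P s" using proc_sum[OF assms, of s] by simp
  also have "\<dots> \<le> 1" by (cases "P s = 0") auto
  finally show ?thesis .
qed

lemma cond_sum_le':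
  assumes "is_process K P" "x \<le> K" shows "(\<Sum>k\<in>{1..x}. cond P s k) \<le> 1"
proof -
  have "(\<Sum>k\<in>{1..x}. cond P s k) \<le> (\<Sum>k\<in>{1..K}. cond P s k)"
    by (rule sum_mono2) (use assms cond_nonneg in auto)
  then show ?thesis using cond_sum_le[OF assms(1), of s] by linarith
qed

lemma mult_cond:
  assumes "is_process K P" shows "P s * cond P s k = P (s @ [k])"
proof (cases "P s = 0")
  case True
  then show ?thesis using proc_child_le[OF assms, of s k] proc_nonneg[OF assms, of "s@[k]"] by simp
next
  case False
  then show ?thesis by (simp add: cond_def)
qed


lemma ivl_rev_Cons_eq:
  "ivl_rev P (x#rs) =
    (fst (ivl_rev P rs) + (snd (ivl_rev P rs) - fst (ivl_rev P rs)) * (\<Sum>k\<in>{1..<x}. cond P (rev rs) k),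
     fst (ivl_rev P rs) + (snd (ivl_rev P rs) - fst (ivl_rev P rs)) * (\<Sum>k\<in>{1..x}. cond P (rev rs) k))"
  by (simp add: case_prod_beta Let_def)

lemma ivl_rev_props:
  assumes "is_process K P"
  shows "set r \<subseteq> {1..K} \<Longrightarrow> 0 \<le> fst (ivl_rev P r) \<and> fst (ivl_rev P r) \<le> snd (ivl_rev P r)
     \<and> snd (ivl_rev P r) \<le> 1 \<and> snd (ivl_rev P r) - fst (ivl_rev P r) = P (rev r)"
proof (induction r)
  case Nil
  then show ?case using proc_empty[OF assms] by simp
next
  case (Cons x rs)
  define a where "a = fst (ivl_rev P rs)"
  define b where "b = snd (ivl_rev P rs)"
  define s where "s = rev rs"
  define c1 where "c1 = (\<Sum>k\<in>{1..<x}. cond P s k)"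
  define c2 where "c2 = (\<Sum>k\<in>{1..x}. cond P s k)"
  have x: "1 \<le> x" "x \<le> K" using Cons.prems by auto
  have IH: "0 \<le> a" "a \<le> b" "b \<le> 1" "b - a = P s" using Cons a_def b_def s_def by auto
  have e: "ivl_rev P (x#rs) = (a + (b-a)*c1, a + (b-a)*c2)"
    unfolding a_def b_def c1_def c2_def s_def by (rule ivl_rev_Cons_eq)
  have c1: "0 \<le> c1" unfolding c1_def by (rule sum_nonneg) (simp add: cond_nonneg[OF assms])
  have "{1..x} = insert x {1..<x}" using x by auto
  then have c12: "c2 = c1 + cond P s x" unfolding c1_def c2_def by simp
  have c2le: "c2 \<le> 1" unfolding c2_def using cond_sum_le'[OF assms x(2)] .
  have cx: "0 \<le> cond P s x" by (rule cond_nonneg[OF assms])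
  have m: "(b-a) * cond P s x = P (rev (x#rs))" using IH(4) mult_cond[OF assms] s_def by simp
  have ba: "0 \<le> b - a" using IH by simp
  have t1: "0 \<le> (b-a)*c1" using ba c1 by simp
  have t2: "(b-a)*c2 \<le> (b-a)" using ba c2le by (simp add: mult_left_le)
  have t3: "(b-a)*c2 - (b-a)*c1 = (b-a) * cond P s x" using c12 by (simp add: algebra_simps)
  have "0 \<le> (b-a) * cond P s x" using cx ba by simp
  then have t4: "(b-a)*c1 \<le> (b-a)*c2" using t3 by linarith
  show ?case unfolding e using IH t1 t2 t3 t4 m by auto
qed

lemma ivl_rev_nested:
  assumes "is_process K P" "set (x#rs) \<subseteq> {1..K}"
  shows "fst (ivl_rev P rs) \<le> fst (ivl_rev P (x#rs))" "snd (ivl_rev P (x#rs)) \<le> snd (ivl_rev P rs)"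
proof -
  define a where "a = fst (ivl_rev P rs)"
  define b where "b = snd (ivl_rev P rs)"
  define s where "s = rev rs"
  define c1 where "c1 = (\<Sum>k\<in>{1..<x}. cond P s k)"
  define c2 where "c2 = (\<Sum>k\<in>{1..x}. cond P s k)"
  have x: "1 \<le> x" "x \<le> K" using assms by auto
  have IH: "0 \<le> a" "a \<le> b" "b \<le> 1" using ivl_rev_props[OF assms(1), of rs] assms a_def b_def by auto
  have e: "ivl_rev P (x#rs) = (a + (b-a)*c1, a + (b-a)*c2)"
    unfolding a_def b_def c1_def c2_def s_def by (rule ivl_rev_Cons_eq)
  have c1: "0 \<le> c1" unfolding c1_def by (rule sum_nonneg) (simp add: cond_nonneg[OF assms(1)])
  have c2le: "c2 \<le> 1" unfolding c2_def using cond_sum_le'[OF assms(1) x(2)] .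
  have ba: "0 \<le> b - a" using IH by simp
  have t1: "0 \<le> (b-a)*c1" using ba c1 by simp
  have t2: "(b-a)*c2 \<le> (b-a)" using ba c2le by (simp add: mult_left_le)
  show "fst (ivl_rev P rs) \<le> fst (ivl_rev P (x#rs))" using t1 e a_def by simp
  show "snd (ivl_rev P (x#rs)) \<le> snd (ivl_rev P rs)" using t2 e b_def by simp
qed

lemma ivl_rev_sibling:
  assumes "is_process K P" "set rs \<subseteq> {1..K}" "x < x'"
  shows "snd (ivl_rev P (x#rs)) \<le> fst (ivl_rev P (x'#rs))"
proof -
  define a where "a = fst (ivl_rev P rs)"
  define b where "b = snd (ivl_rev P rs)"
  define s where "s = rev rs"
  have IH: "a \<le> b" using ivl_rev_props[OF assms(1), of rs] assms a_def b_def by auto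
  have le: "(\<Sum>k\<in>{1..x}. cond P s k) \<le> (\<Sum>k\<in>{1..<x'}. cond P s k)"
    by (rule sum_mono2) (use assms cond_nonneg in auto)
  have "(b-a) * (\<Sum>k\<in>{1..x}. cond P s k) \<le> (b-a) * (\<Sum>k\<in>{1..<x'}. cond P s k)"
    using le IH by (simp add: mult_left_mono)
  then show ?thesis unfolding ivl_rev_Cons_eq a_def b_def s_def by simp
qed

lemma ivl_rev_disj:
  assumes "is_process K P"
  shows "length r = n \<Longrightarrow> length r' = n \<Longrightarrow> set r \<subseteq> {1..K} \<Longrightarrow> set r' \<subseteq> {1..K} \<Longrightarrow> r \<noteq> r' \<Longrightarrow>
    snd (ivl_rev P r) \<le> fst (ivl_rev P r') \<or> snd (ivl_rev P r') \<le> fst (ivl_rev P r)"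
proof (induction n arbitrary: r r')
  case 0
  then show ?case by simp
next
  case (Suc n)
  obtain x rs where r: "r = x#rs" "length rs = n" using Suc.prems(1) by (auto simp: length_Suc_conv)
  obtain x' rs' where r': "r' = x'#rs'" "length rs' = n" using Suc.prems(2) by (auto simp: length_Suc_conv)
  have s1: "set rs \<subseteq> {1..K}" "set rs' \<subseteq> {1..K}" using Suc.prems r r' by auto
  show ?case
  proof (cases "rs = rs'")
    case True
    then have "x \<noteq> x'" using Suc.prems r r' by auto
    then have "x < x' \<or> x' < x" by auto
    then show ?thesis using ivl_rev_sibling[OF assms s1(1)] True r r' by auto
  next
    case False
    then have d: "snd (ivl_rev P rs) \<le> fst (ivl_rev P rs') \<or> snd (ivl_rev P rs') \<le> fst (ivl_rev P rs)"
      using Suc.IH[OF r(2) r'(2) s1] by blast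
    have n1: "fst (ivl_rev P rs) \<le> fst (ivl_rev P r)" "snd (ivl_rev P r) \<le> snd (ivl_rev P rs)"
      using ivl_rev_nested[OF assms, of x rs] Suc.prems r by auto
    have n2: "fst (ivl_rev P rs') \<le> fst (ivl_rev P r')" "snd (ivl_rev P r') \<le> snd (ivl_rev P rs')"
      using ivl_rev_nested[OF assms, of x' rs'] Suc.prems r' by auto
    show ?thesis using d n1 n2 by linarith
  qed
qed

lemma seqs_mem: "s \<in> seqs K n \<longleftrightarrow> length s = n \<and> set s \<subseteq> {1..K}"
  by (simp add: seqs_def)

lemma finite_seqs: "finite (seqs K n)"
proof -
  have "seqs K n = {xs. set xs \<subseteq> {1..K} \<and> length xs = n}" by (auto simp: seqs_def)
  then show ?thesis using finite_lists_length_eq[of "{1..K}" n] by simp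
qed

lemma ivl_props:
  assumes "is_process K P" "s \<in> seqs K n"
  shows "0 \<le> fst (ivl_rev P (rev s)) \<and> fst (ivl_rev P (rev s)) \<le> snd (ivl_rev P (rev s))
     \<and> snd (ivl_rev P (rev s)) \<le> 1 \<and> snd (ivl_rev P (rev s)) - fst (ivl_rev P (rev s)) = P s"
  using ivl_rev_props[OF assms(1), of "rev s"] assms(2) by (simp add: seqs_def)

lemma ivl_sub: "is_process K P \<Longrightarrow> s \<in> seqs K n \<Longrightarrow> ivl P s \<subseteq> {0..<1}"
  using ivl_props[of K P s n] unfolding ivl_def by auto

lemma ivl_measure: "is_process K P \<Longrightarrow> s \<in> seqs K n \<Longrightarrow> measure lborel (ivl P s) = P s"
  using ivl_props[of K P s n] unfolding ivl_def by auto

lemma ivl_emeasure: "is_process K P \<Longrightarrow> s \<in> seqs K n \<Longrightarrow> emeasure lborel (ivl P s) \<noteq> \<infinity>"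
  using ivl_props[of K P s n] unfolding ivl_def by auto

lemma ivl_sets: "ivl P s \<in> sets lborel"
  unfolding ivl_def by simp

lemma ivl_disj:
  assumes "is_process K P" "s \<in> seqs K n" "t \<in> seqs K n" "s \<noteq> t"
  shows "ivl P s \<inter> ivl P t = {}"
proof -
  have "snd (ivl_rev P (rev s)) \<le> fst (ivl_rev P (rev t)) \<or> snd (ivl_rev P (rev t)) \<le> fst (ivl_rev P (rev s))"
    by (rule ivl_rev_disj[OF assms(1), of _ n]) (use assms in \<open>auto simp: seqs_def\<close>)
  then show ?thesis unfolding ivl_def by auto
qed

lemma seqs_Suc: "seqs K (Suc n) = (\<lambda>(s,k). s @ [k]) ` (seqs K n \<times> {1..K})"
proof
  show "(\<lambda>(s,k). s @ [k]) ` (seqs K n \<times> {1..K}) \<subseteq> seqs K (Suc n)" by (auto simp: seqs_def)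
  show "seqs K (Suc n) \<subseteq> (\<lambda>(s,k). s @ [k]) ` (seqs K n \<times> {1..K})"
  proof
    fix t assume t: "t \<in> seqs K (Suc n)"
    then have ne: "t \<noteq> []" by (auto simp: seqs_def)
    have "t = (\<lambda>(s,k). s @ [k]) (butlast t, last t)" using ne by simp
    moreover have "(butlast t, last t) \<in> seqs K n \<times> {1..K}"
      using t ne last_in_set[OF ne] by (auto simp: seqs_def dest: in_set_butlastD) (auto simp: subset_iff)
    ultimately show "t \<in> (\<lambda>(s,k). s @ [k]) ` (seqs K n \<times> {1..K})" by blast
  qed
qed

lemma seqs_sum:
  assumes "is_process K P" shows "(\<Sum>s\<in>seqs K n. P s) = 1"
proof (induction n)
  case 0
  have "seqs K 0 = {[]}" by (auto simp: seqs_def)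
  then show ?case using proc_empty[OF assms] by simp
next
  case (Suc n)
  have inj: "inj_on (\<lambda>(s,k). s @ [k]) (seqs K n \<times> {1..K})" by (auto simp: inj_on_def)
  have "(\<Sum>s\<in>seqs K (Suc n). P s) = (\<Sum>(s,k)\<in>seqs K n \<times> {1..K}. P (s @ [k]))"
    unfolding seqs_Suc by (subst sum.reindex[OF inj]) (simp add: case_prod_beta)
  also have "\<dots> = (\<Sum>s\<in>seqs K n. \<Sum>k\<in>{1..K}. P (s @ [k]))"
    by (rule sum.cartesian_product[symmetric])
  also have "\<dots> = (\<Sum>s\<in>seqs K n. P s)" by (rule sum.cong[OF refl]) (rule proc_sum[OF assms, symmetric])
  finally show ?case using Suc by simp
qed

lemma ico_endpoint:
  fixes a b c d :: real
  assumes "{a..<b} \<inter> {c..<d} \<noteq> {}" "\<not> {a..<b} \<subseteq> {c..<d}"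
  shows "c \<in> {a..<b} \<or> d \<in> {a..<b}"
proof -
  obtain z where "z \<in> {a..<b} \<inter> {c..<d}" using assms(1) by blast
  then have z: "a \<le> z" "z < b" "c \<le> z" "z < d" by auto
  obtain w where w: "a \<le> w" "w < b" "w < c \<or> d \<le> w" using assms(2) by (auto simp: subset_iff not_le)
  show ?thesis using z w by auto
qed

lemma fm01: "{0..<1::real} \<in> fmeasurable lborel"
  by (rule fmeasurableI) auto

lemma fm_sub: "B \<subseteq> {0..<1::real} \<Longrightarrow> B \<in> sets lborel \<Longrightarrow> B \<in> fmeasurable lborel"
  by (rule fmeasurableI2[OF fm01])

lemma small_S:
  assumes "lam \<le> log 2 (1 / p)" "0 \<le> (p::real)"
  shows "p \<le> 2 powr (- lam)"
proof (cases "p = 0")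
  case True then show ?thesis by simp
next
  case False
  then have pp: "0 < p" using assms by simp
  have "2 powr lam \<le> 1 / p" using assms(1) le_log_iff[of 2 "1/p" lam] pp by simp
  then have "p * 2 powr lam \<le> 1" using pp by (simp add: field_simps)
  then show ?thesis using pp by (simp add: powr_minus field_simps)
qed

lemma big_T:
  assumes "log 2 (1 / p) \<le> tau" "0 < (p::real)"
  shows "2 powr (- tau) \<le> p"
proof -
  have "1 / p \<le> 2 powr tau" using assms(1) log_le_iff[of 2 "1/p" tau] assms(2) by simp
  then have "1 \<le> p * 2 powr tau" using assms(2) by (simp add: field_simps)
  then show ?thesis using assms(2) by (simp add: powr_minus field_simps)
qed

theorem theorem2:
  fixes M N n m :: nat and PX PY :: "nat list \<Rightarrow> real" and lam tau :: real
  assumes "M \<ge> 1" and "N \<ge> 1"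
    and "is_process M PX" and "is_process N PY"
    and "lam \<ge> 0" and "tau \<ge> 0"
  shows "prob_T_gt M PX N PY n m
     \<le> (\<Sum>xs\<in>seqs M m - S_set M PX m lam. PX xs)
       + (\<Sum>ys\<in>seqs N n - T_set N PY n tau. PY ys)
       + 2 powr (- lam + tau + 1)"
proof -
  note pX = assms(3) and pY = assms(4)
  let ?stop = "int_stopped PX N PY n"
  define Xs where "Xs = seqs M m"
  define Ys where "Ys = seqs N n"
  define S where "S = S_set M PX m lam"
  define T where "T = T_set N PY n tau"
  define A where "A = {xs\<in>S. \<not> ?stop xs}"
  have SX: "S \<subseteq> Xs" by (auto simp: S_def S_set_def Xs_def)
  have TY: "T \<subseteq> Ys" by (auto simp: T_def T_set_def Ys_def)
  have finX: "finite Xs" by (simp add: Xs_def finite_seqs)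
  have finY: "finite Ys" by (simp add: Ys_def finite_seqs)
  have finS: "finite S" using SX finX finite_subset by blast
  have AX: "A \<subseteq> Xs" using SX by (auto simp: A_def)
  have finA: "finite A" using AX finX finite_subset by blast
  have PXnn: "\<And>xs. 0 \<le> PX xs" by (rule proc_nonneg[OF pX])
  have PYnn: "\<And>ys. 0 \<le> PY ys" by (rule proc_nonneg[OF pY])

  have st1: "prob_T_gt M PX N PY n m \<le> (\<Sum>xs\<in>Xs. if \<not> ?stop xs then PX xs else 0)"
    unfolding prob_T_gt_def Xs_def
  proof (rule sum_mono)
    fix xs assume "xs \<in> seqs M m"
    then have tk: "take m xs = xs" by (simp add: seqs_def)
    show "(if \<forall>i\<le>m. \<not> ?stop (take i xs) then PX xs else 0) \<le> (if \<not> ?stop xs then PX xs else 0)"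
    proof (cases "\<forall>i\<le>m. \<not> ?stop (take i xs)")
      case True
      then have "\<not> ?stop xs" using tk by (metis order_refl)
      then show ?thesis using True by simp
    next
      case False
      then show ?thesis using PXnn[of xs] by auto
    qed
  qed

  have st2: "(\<Sum>xs\<in>Xs. if \<not> ?stop xs then PX xs else 0) \<le> (\<Sum>xs\<in>Xs - S. PX xs) + (\<Sum>xs\<in>A. PX xs)"
  proof -
    have "(\<Sum>xs\<in>Xs. if \<not> ?stop xs then PX xs else 0)
        = (\<Sum>xs\<in>Xs - S. if \<not> ?stop xs then PX xs else 0) + (\<Sum>xs\<in>S. if \<not> ?stop xs then PX xs else 0)"
      by (rule sum.subset_diff[OF SX finX])
    moreover have "(\<Sum>xs\<in>Xs - S. if \<not> ?stop xs then PX xs else 0) \<le> (\<Sum>xs\<in>Xs - S. PX xs)"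
      by (rule sum_mono) (simp add: PXnn)
    moreover have "(\<Sum>xs\<in>S. if \<not> ?stop xs then PX xs else 0) = (\<Sum>xs\<in>A. PX xs)"
      unfolding A_def by (rule sum.inter_filter[OF finS, symmetric])
    ultimately show ?thesis by linarith
  qed

  have PXsmall: "\<And>xs. xs \<in> A \<Longrightarrow> PX xs \<le> 2 powr (- lam)"
    using small_S PXnn by (auto simp: A_def S_def S_set_def)

  define U where "U = (\<Union>xs\<in>A. ivl PX xs)"
  define V where "V = (\<Union>ys\<in>Ys. ivl PY ys)"
  have Usets: "U \<in> sets lborel" unfolding U_def by (rule sets.finite_UN[OF finA]) (rule ivl_sets)
  have Vsets: "V \<in> sets lborel" unfolding V_def by (rule sets.finite_UN[OF finY]) (rule ivl_sets)
  have U01: "U \<subseteq> {0..<1}" unfolding U_def using AX ivl_sub[OF pX] by (fastforce simp: Xs_def)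
  have V01: "V \<subseteq> {0..<1}" unfolding V_def using ivl_sub[OF pY] by (fastforce simp: Ys_def)
  have mU: "measure lborel U = (\<Sum>xs\<in>A. PX xs)"
  proof -
    have "measure lborel U = (\<Sum>xs\<in>A. measure lborel (ivl PX xs))"
      unfolding U_def
    proof (rule measure_finite_Union[OF finA])
      show "ivl PX ` A \<subseteq> sets lborel" using ivl_sets by blast
      show "disjoint_family_on (ivl PX) A"
        unfolding disjoint_family_on_def
      proof (intro ballI impI)
        fix i j assume "i \<in> A" "j \<in> A" "i \<noteq> j"
        then show "ivl PX i \<inter> ivl PX j = {}" using ivl_disj[OF pX, of i m j] AX by (auto simp: Xs_def)
      qed
      show "\<And>i. i \<in> A \<Longrightarrow> emeasure lborel (ivl PX i) \<noteq> \<infinity>"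
        using AX ivl_emeasure[OF pX] by (auto simp: Xs_def)
    qed
    also have "\<dots> = (\<Sum>xs\<in>A. PX xs)"
      by (rule sum.cong[OF refl]) (use AX ivl_measure[OF pX] in \<open>auto simp: Xs_def\<close>)
    finally show ?thesis .
  qed
  have mV: "measure lborel V = 1"
  proof -
    have "measure lborel V = (\<Sum>ys\<in>Ys. measure lborel (ivl PY ys))"
      unfolding V_def
    proof (rule measure_finite_Union[OF finY])
      show "ivl PY ` Ys \<subseteq> sets lborel" using ivl_sets by blast
      show "disjoint_family_on (ivl PY) Ys"
        unfolding disjoint_family_on_def
      proof (intro ballI impI)
        fix i j assume "i \<in> Ys" "j \<in> Ys" "i \<noteq> j"
        then show "ivl PY i \<inter> ivl PY j = {}" using ivl_disj[OF pY, of i n j] by (auto simp: Ys_def)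
      qed
      show "\<And>i. i \<in> Ys \<Longrightarrow> emeasure lborel (ivl PY i) \<noteq> \<infinity>"
        using ivl_emeasure[OF pY] by (auto simp: Ys_def)
    qed
    also have "\<dots> = (\<Sum>ys\<in>Ys. PY ys)"
      by (rule sum.cong[OF refl]) (use ivl_measure[OF pY] in \<open>auto simp: Ys_def\<close>)
    also have "\<dots> = 1" unfolding Ys_def by (rule seqs_sum[OF pY])
    finally show ?thesis .
  qed
  have m0: "measure lborel ({0..<1} - V) = 0"
    using measure_Diff[of lborel "{0..<1}" V] V01 Vsets mV by simp

  define g where "g ys = (if ys \<in> T then (if 0 < PY ys then 2 * 2 powr (- lam) else 0) else PY ys)" for ys
  have gnn: "\<And>ys. 0 \<le> g ys" by (simp add: g_def PYnn)

  have pery: "measure lborel (U \<inter> ivl PY ys) \<le> g ys" if ys: "ys \<in> Ys" for ys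
  proof -
    define c where "c = fst (ivl_rev PY (rev ys))"
    define d where "d = snd (ivl_rev PY (rev ys))"
    have J: "ivl PY ys = {c..<d}" by (simp add: ivl_def c_def d_def)
    have cd: "0 \<le> c" "c \<le> d" "d \<le> 1" "d - c = PY ys"
      using ivl_props[OF pY, of ys n] ys by (auto simp: Ys_def c_def d_def)
    have UJsets: "U \<inter> ivl PY ys \<in> sets lborel" using Usets ivl_sets by blast
    show ?thesis
    proof (cases "PY ys = 0")
      case True
      then have "ivl PY ys = {}" using J cd by auto
      then show ?thesis using gnn[of ys] by simp
    next
      case pos: False
      then have pos: "0 < PY ys" using PYnn[of ys] by simp
      show ?thesis
      proof (cases "ys \<in> T")
        case False
        have "measure lborel (U \<inter> ivl PY ys) \<le> measure lborel (ivl PY ys)"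
          by (rule measure_mono_fmeasurable[OF _ UJsets]) (use fm_sub ivl_sub[OF pY] ys ivl_sets in \<open>auto simp: Ys_def\<close>)
        also have "\<dots> = PY ys" using ivl_measure[OF pY] ys by (simp add: Ys_def)
        finally show ?thesis using False by (simp add: g_def)
      next
        case inT: True
        define W where "W p = (\<Union>xs\<in>{xs\<in>A. p \<in> ivl PX xs}. ivl PX xs)" for p
        have Wsets: "W p \<in> sets lborel" for p
          unfolding W_def by (rule sets.finite_UN) (use finA ivl_sets in auto)
        have W01: "W p \<subseteq> {0..<1}" for p
          unfolding W_def using AX ivl_sub[OF pX] by (fastforce simp: Xs_def)
        have Wle: "measure lborel (W p) \<le> 2 powr (- lam)" for p
        proof (cases "\<exists>xs0\<in>A. p \<in> ivl PX xs0")
          case True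
          then obtain xs0 where x0: "xs0 \<in> A" "p \<in> ivl PX xs0" by blast
          have "W p = ivl PX xs0"
          proof
            show "ivl PX xs0 \<subseteq> W p" using x0 by (auto simp: W_def)
            show "W p \<subseteq> ivl PX xs0"
            proof
              fix z assume "z \<in> W p"
              then obtain xs where xs: "xs \<in> A" "p \<in> ivl PX xs" "z \<in> ivl PX xs" by (auto simp: W_def)
              have "xs = xs0"
              proof (rule ccontr)
                assume "xs \<noteq> xs0"
                then have "ivl PX xs \<inter> ivl PX xs0 = {}"
                  using ivl_disj[OF pX, of xs m xs0] xs x0 AX by (auto simp: Xs_def)
                then show False using xs x0 by auto
              qed
              then show "z \<in> ivl PX xs0" using xs by simp
            qed
          qed
          then show ?thesis using ivl_measure[OF pX, of xs0 m] x0 AX PXsmall[OF x0(1)] by (auto simp: Xs_def)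
        next
          case False
          then have "W p = {}" by (auto simp: W_def)
          then show ?thesis by simp
        qed
        have sub: "U \<inter> ivl PY ys \<subseteq> W c \<union> W d"
        proof
          fix z assume z: "z \<in> U \<inter> ivl PY ys"
          then obtain xs where xs: "xs \<in> A" "z \<in> ivl PX xs" by (auto simp: U_def)
          have ns: "\<not> ivl PX xs \<subseteq> ivl PY ys" using xs(1) ys by (auto simp: A_def int_stopped_def Ys_def)
          have ne: "ivl PX xs \<inter> ivl PY ys \<noteq> {}" using xs z by auto
          have IX: "ivl PX xs = {fst (ivl_rev PX (rev xs))..<snd (ivl_rev PX (rev xs))}"
            by (simp add: ivl_def)
          have "c \<in> ivl PX xs \<or> d \<in> ivl PX xs"
            unfolding IX by (rule ico_endpoint[OF ne[unfolded IX J] ns[unfolded IX J]])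
          then show "z \<in> W c \<union> W d" using xs by (auto simp: W_def)
        qed
        have "measure lborel (U \<inter> ivl PY ys) \<le> measure lborel (W c \<union> W d)"
          by (rule measure_mono_fmeasurable[OF sub UJsets]) (rule fm_sub, use W01 Wsets in auto)
        also have "\<dots> \<le> measure lborel (W c) + measure lborel (W d)"
          by (rule measure_Un_le[OF Wsets Wsets])
        also have "\<dots> \<le> 2 * 2 powr (- lam)" using Wle[of c] Wle[of d] by simp
        finally show ?thesis using inT pos by (simp add: g_def)
      qed
    qed
  qed

  define T' where "T' = {ys\<in>T. 0 < PY ys}"
  have finT: "finite T" using TY finY finite_subset by blast
  have cardT: "real (card T') \<le> 2 powr tau"
  proof -
    have "real (card T') * 2 powr (- tau) = (\<Sum>ys\<in>T'. 2 powr (- tau))" by simp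
    also have "\<dots> \<le> (\<Sum>ys\<in>T'. PY ys)"
      by (rule sum_mono) (use big_T in \<open>auto simp: T'_def T_def T_set_def\<close>)
    also have "\<dots> \<le> (\<Sum>ys\<in>Ys. PY ys)"
      by (rule sum_mono2[OF finY]) (use TY PYnn in \<open>auto simp: T'_def\<close>)
    also have "\<dots> = 1" unfolding Ys_def by (rule seqs_sum[OF pY])
    finally have "real (card T') * 2 powr (- tau) \<le> 1" .
    then have "real (card T') * 2 powr (- tau) * 2 powr tau \<le> 2 powr tau" by simp
    moreover have "2 powr (- tau) * 2 powr tau = (1::real)" by (simp add: powr_add[symmetric])
    ultimately show ?thesis by (simp add: mult.assoc)
  qed

  have "measure lborel U \<le> measure lborel ((\<Union>ys\<in>Ys. U \<inter> ivl PY ys) \<union> ({0..<1} - V))"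
  proof (rule measure_mono_fmeasurable[OF _ Usets])
    show "U \<subseteq> (\<Union>ys\<in>Ys. U \<inter> ivl PY ys) \<union> ({0..<1} - V)" using U01 by (auto simp: V_def)
    have "(\<Union>ys\<in>Ys. U \<inter> ivl PY ys) \<in> sets lborel"
      by (rule sets.finite_UN[OF finY]) (use Usets ivl_sets in auto)
    then show "(\<Union>ys\<in>Ys. U \<inter> ivl PY ys) \<union> ({0..<1} - V) \<in> fmeasurable lborel"
      using U01 Vsets by (intro fm_sub) auto
  qed
  also have "\<dots> \<le> measure lborel (\<Union>ys\<in>Ys. U \<inter> ivl PY ys) + measure lborel ({0..<1} - V)"
    by (rule measure_Un_le) (use finY Usets Vsets ivl_sets in auto)
  also have "\<dots> \<le> (\<Sum>ys\<in>Ys. measure lborel (U \<inter> ivl PY ys))"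
    using measure_UNION_le[OF finY, of "\<lambda>ys. U \<inter> ivl PY ys" lborel] m0 Usets ivl_sets by auto
  also have "\<dots> \<le> (\<Sum>ys\<in>Ys. g ys)" by (rule sum_mono) (rule pery)
  also have "\<dots> = (\<Sum>ys\<in>Ys - T. g ys) + (\<Sum>ys\<in>T. g ys)" by (rule sum.subset_diff[OF TY finY])
  also have "(\<Sum>ys\<in>Ys - T. g ys) = (\<Sum>ys\<in>Ys - T. PY ys)" by (rule sum.cong) (auto simp: g_def)
  also have "(\<Sum>ys\<in>T. g ys) = (\<Sum>ys\<in>T. if 0 < PY ys then 2 * 2 powr (- lam) else 0)"
    by (rule sum.cong) (auto simp: g_def)
  also have "\<dots> = (\<Sum>ys\<in>T'. 2 * 2 powr (- lam))"
    unfolding T'_def by (rule sum.inter_filter[OF finT, symmetric])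
  also have "\<dots> = real (card T') * (2 * 2 powr (- lam))" by simp
  also have "\<dots> \<le> 2 powr tau * (2 * 2 powr (- lam))"
    by (rule mult_right_mono[OF cardT]) simp
  also have "2 powr tau * (2 * 2 powr (- lam)) = 2 powr (- lam + tau + 1)"
    by (simp only: powr_add) (simp add: mult_ac)
  finally have st3: "(\<Sum>xs\<in>A. PX xs) \<le> (\<Sum>ys\<in>Ys - T. PY ys) + 2 powr (- lam + tau + 1)"
    using mU by simp
  show ?thesis using st1 st2 st3 unfolding Xs_def Ys_def S_def T_def by linarith
qed

end
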